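(* Let $0<\alpha<1$ and let $\mu,\sigma,\varepsilon$ satisfy (A3). Put $$c_0=\operatorname{corr}\big(F^{-1}(U),\mathbf 1_{(\alpha,1)}(U)\big),\qquad \operatorname{TVaR}_\alpha(F)=\frac1{1-\alpha}\int_\alpha^1F^{-1}(u)\,du.$$ Then $$\sup_{G\in\mathcal M_\varepsilon(\mu,\sigma)}\operatorname{TVaR}_\alpha(G)=\mu+\sigma\,\frac{\frac{\alpha}{1-\alpha}+\lambda(\operatorname{TVaR}_\alpha(F)-\mu_F)}{\sqrt{\frac{\alpha}{1-\alpha}+2\lambda(\operatorname{TVaR}_\alpha(F)-\mu_F)+\lambda^2\sigma_F^2}}.$$ Here $\lambda$ is determined as follows. - If $\varepsilon<(\mu_F-\mu)^2+(\sigma_F-\sigma)^2+2\sigma\sigma_F(1-c_0)$, then $$\lambda=\frac{K}{\sigma_F^2}\sqrt{\frac{C^2-V\sigma_F^2}{K^2-\sigma^2\sigma_F^2}}-\frac{C}{\sigma_F^2},$$ with $V=\frac{\alpha}{1-\alpha}$, $C=\operatorname{TVaR}_\alpha(F)-\mu_F$ and $K=\frac12(\mu_F^2+\sigma_F^2+\mu^2+\sigma^2-2\mu\mu_F-\varepsilon)$. - Otherwise, $\lambda=0$.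
   Context: Let $(\Omega,\mathcal A,\mathbb P)$ be an atomless probability space and $U\sim\mathcal U(0,1)$. $\mathcal M^2$ denotes the distribution functions on $\mathbb R$ with finite second moment, and $G^{-1}(u)=\inf\{y:G(y)\ge u\}$. $\operatorname{TVaR}_\alpha(G)=\frac1{1-\alpha}\int_\alpha^1G^{-1}(u)\,du$. This is the distortion risk measure $H_g(G)=\int_0^1\gamma G^{-1}$ with weight $\gamma(u)=\frac1{1-\alpha}\mathbf 1_{(\alpha,1)}(u)$. The order-2 Wasserstein distance is $d_W(G_1,G_2)=\big(\int_0^1(G_1^{-1}-G_2^{-1})^2\big)^{1/2}$. A reference $F\in\mathcal M^2$ is fixed, with mean $\mu_F$ and standard deviation $\sigma_F>0$. For $\mu\in\mathbb R$, $\sigma>0$, $0\le\varepsilon\le\infty$: $$\mathcal M_\varepsilon(\mu,\sigma)=\Big\{G\in\mathcal M^2:\int x\,dG=\mu,\ \int x^2dG=\mu^2+\sigma^2,\ d_W(F,G)\le\sqrt\varepsilon\Big\}.$$ (A3) denotes the assumption $\varepsilon>(\mu_F-\mu)^2+(\sigma_F-\sigma)^2$. *)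

theory Defs
  imports "HOL-Probability.Probability"
begin

definition finite_second_moment :: "real measure \<Rightarrow> bool" where
  "finite_second_moment M \<longleftrightarrow> real_distribution M \<and> integrable M (\<lambda>x. x ^ 2)"

definition quantile :: "real measure \<Rightarrow> real \<Rightarrow> real" where
  "quantile M u = Inf {y. cdf M y \<ge> u}"

definition dmean :: "real measure \<Rightarrow> real" where
  "dmean M = (\<integral>x. x \<partial>M)"

definition dsd :: "real measure \<Rightarrow> real" where
  "dsd M = sqrt ((\<integral>x. x ^ 2 \<partial>M) - (dmean M) ^ 2)"

definition TVaR :: "real \<Rightarrow> real measure \<Rightarrow> real" where
  "TVaR \<alpha> M = (1 / (1 - \<alpha>)) * (LBINT u:{\<alpha><..<1}. quantile M u)"

definition wass2_sq :: "real measure \<Rightarrow> real measure \<Rightarrow> real" where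
  "wass2_sq G1 G2 = (LBINT u:{0<..<1}. (quantile G1 u - quantile G2 u) ^ 2)"

definition wass2 :: "real measure \<Rightarrow> real measure \<Rightarrow> real" where
  "wass2 G1 G2 = sqrt (wass2_sq G1 G2)"

definition amb_set :: "real measure \<Rightarrow> ereal \<Rightarrow> real \<Rightarrow> real \<Rightarrow> real measure set" where
  "amb_set F \<epsilon> \<mu> \<sigma> = {G. finite_second_moment G \<and> (\<integral>x. x \<partial>G) = \<mu> \<and>
       (\<integral>x. x ^ 2 \<partial>G) = \<mu> ^ 2 + \<sigma> ^ 2 \<and> (\<epsilon> = \<infinity> \<or> wass2 F G \<le> sqrt (real_of_ereal \<epsilon>))}"

definition covar :: "'a measure \<Rightarrow> ('a \<Rightarrow> real) \<Rightarrow> ('a \<Rightarrow> real) \<Rightarrow> real" where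
  "covar P X Y = (\<integral>w. X w * Y w \<partial>P) - (\<integral>w. X w \<partial>P) * (\<integral>w. Y w \<partial>P)"

definition corr :: "'a measure \<Rightarrow> ('a \<Rightarrow> real) \<Rightarrow> ('a \<Rightarrow> real) \<Rightarrow> real" where
  "corr P X Y = covar P X Y / sqrt (covar P X X * covar P Y Y)"

text \<open>U ~ Unif(0,1): identity random variable on the uniform measure on (0,1).\<close>
definition unif01 :: "real measure" where
  "unif01 = uniform_measure lborel {0<..<1}"

end

theory Submission
  imports Defs
begin

lemma quantile_meas: assumes "real_distribution M" shows "quantile M \<in> borel_measurable borel"
proof -
  interpret real_distribution M by fact
  have mono: "mono_on {0<..<1} (quantile M)"
  proof -
    interpret cdf_distribution M using assms by (simp add: cdf_distribution_def)
    show ?thesis using mono_I unfolding quantile_def .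
  qed
  show ?thesis
  proof (rule measurable_piecewise_restrict[of "{{..0}, {0<..<1}, {1}, {1<..}}"])
    show "countable {{..0::real}, {0<..<1}, {1}, {1<..}}" by simp
    show "\<And>\<Omega>. \<Omega> \<in> {{..0::real}, {0<..<1}, {1}, {1<..}} \<Longrightarrow> \<Omega> \<inter> space borel \<in> sets borel" by auto
    show "space borel \<subseteq> \<Union> {{..0::real}, {0<..<1}, {1}, {1<..}}" by auto
    fix \<Omega> assume "\<Omega> \<in> {{..0::real}, {0<..<1}, {1}, {1<..}}"
    then consider "\<Omega> = {..0}" | "\<Omega> = {0<..<1}" | "\<Omega> = {1}" | "\<Omega> = {1<..}" by blast
    then show "quantile M \<in> borel_measurable (restrict_space borel \<Omega>)"
    proof cases
      case 1
      have "\<And>u. u \<in> space (restrict_space borel \<Omega>) \<Longrightarrow> quantile M u = Inf UNIV"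
        using 1 by (auto simp: quantile_def space_restrict_space intro!: arg_cong[where f=Inf]
           intro: order_trans[OF _ cdf_nonneg])
      then show ?thesis by (subst measurable_cong[of _ _ "\<lambda>_. Inf UNIV"]) auto
    next
      case 2 then show ?thesis using borel_measurable_mono_on_fnc[OF mono] by simp
    next
      case 3
      have "\<And>u. u \<in> space (restrict_space borel \<Omega>) \<Longrightarrow> quantile M u = quantile M 1"
        using 3 by (auto simp: space_restrict_space)
      then show ?thesis by (subst measurable_cong[of _ _ "\<lambda>_. quantile M 1"]) auto
    next
      case 4
      have "\<And>u. u \<in> space (restrict_space borel \<Omega>) \<Longrightarrow> quantile M u = Inf {}"
        using 4 cdf_bounded_prob by (auto simp: quantile_def space_restrict_space intro!: arg_cong[where f=Inf])
          (meson less_le_not_le order_trans)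
      then show ?thesis by (subst measurable_cong[of _ _ "\<lambda>_. Inf {}"]) auto
    qed
  qed
qed

abbreviation N01 :: "real measure" where "N01 \<equiv> restrict_space lborel {0<..<1::real}"

lemma prob_N: "prob_space N01"
  by (auto simp add: emeasure_restrict_space space_restrict_space intro!: prob_spaceI)

lemma meas_N: "f \<in> borel_measurable borel \<Longrightarrow> f \<in> borel_measurable N01"
  by (rule measurable_restrict_space1) simp

lemma absb: "\<bar>a*b\<bar> \<le> a^2 + (b::real)^2"
proof -
  have "0 \<le> (\<bar>a\<bar> - \<bar>b\<bar>)^2" by simp
  then have "2*(\<bar>a\<bar>*\<bar>b\<bar>) \<le> \<bar>a\<bar>^2 + \<bar>b\<bar>^2" by (simp add: power2_eq_square algebra_simps)
  moreover have "0 \<le> \<bar>a\<bar>*\<bar>b\<bar>" by simp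
  moreover have "\<bar>a*b\<bar> = \<bar>a\<bar>*\<bar>b\<bar>" by (rule abs_mult)
  moreover have "\<bar>a\<bar>^2 = a^2" "\<bar>b\<bar>^2 = b^2" by simp_all
  ultimately show ?thesis by linarith
qed

definition SI :: "(real \<Rightarrow> real) \<Rightarrow> bool" where
  "SI x \<longleftrightarrow> x \<in> borel_measurable borel \<and> integrable N01 (\<lambda>u. (x u)^2)"

lemma int_const_N: "integrable N01 (\<lambda>u. c::real)"
  using prob_space.finite_measure[OF prob_N] finite_measure.integrable_const by blast

lemma meas1_N: "measure N01 {0<..<1} = 1"
  by (simp add: measure_restrict_space)

lemma integral_const_N: "integral\<^sup>L N01 (\<lambda>u. c::real) = c"
  by (simp add: space_restrict_space meas1_N)

lemma SI_prod: assumes "SI x" "SI y" shows "integrable N01 (\<lambda>u. x u * y u)"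
proof (rule Bochner_Integration.integrable_bound[where f="\<lambda>u. (x u)^2 + (y u)^2"])
  show "integrable N01 (\<lambda>u. (x u)^2 + (y u)^2)" using assms by (auto simp: SI_def)
  show "(\<lambda>u. x u * y u) \<in> borel_measurable N01" using assms by (auto simp: SI_def intro!: meas_N)
  show "AE u in N01. norm (x u * y u) \<le> norm ((x u)^2 + (y u)^2)"
  proof (rule AE_I2)
    fix u
    have "\<bar>x u * y u\<bar> \<le> (x u)^2 + (y u)^2" by (rule absb)
    then show "norm (x u * y u) \<le> norm ((x u)^2 + (y u)^2)" by simp
  qed
qed

lemma SI_const: "SI (\<lambda>_. c)"
  by (simp add: SI_def int_const_N)

lemma SI_int: assumes "SI x" shows "integrable N01 x"
  using SI_prod[OF assms SI_const[of 1]] by simp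

lemma bil4:
  assumes I: "SI I" and f: "SI f" and q: "SI q"
  shows "integral\<^sup>L N01 (\<lambda>u. (a1 + a2*I u + a3*f u + a4*q u) * (b1 + b2*I u + b3*f u + b4*q u))
    = a1*b1 + (a1*b2 + a2*b1) * integral\<^sup>L N01 I + (a1*b3+a3*b1) * integral\<^sup>L N01 f
      + (a1*b4+a4*b1) * integral\<^sup>L N01 q + a2*b2 * integral\<^sup>L N01 (\<lambda>u. I u * I u)
      + (a2*b3+a3*b2) * integral\<^sup>L N01 (\<lambda>u. I u * f u) + (a2*b4+a4*b2) * integral\<^sup>L N01 (\<lambda>u. I u * q u)
      + a3*b3 * integral\<^sup>L N01 (\<lambda>u. f u * f u) + (a3*b4+a4*b3) * integral\<^sup>L N01 (\<lambda>u. f u * q u)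
      + a4*b4 * integral\<^sup>L N01 (\<lambda>u. q u * q u)"
proof -
  have e: "(\<lambda>u. (a1 + a2*I u + a3*f u + a4*q u) * (b1 + b2*I u + b3*f u + b4*q u)) =
    (\<lambda>u. a1*b1 + (a1*b2 + a2*b1) * I u + (a1*b3+a3*b1) * f u
      + (a1*b4+a4*b1) * q u + a2*b2 * (I u * I u)
      + (a2*b3+a3*b2) * (I u * f u) + (a2*b4+a4*b2) * (I u * q u)
      + a3*b3 * (f u * f u) + (a3*b4+a4*b3) * (f u * q u)
      + a4*b4 * (q u * q u))"
    by (rule ext) (simp add: algebra_simps)
  have ii: "integrable N01 I" "integrable N01 f" "integrable N01 q"
    using I f q by (auto intro: SI_int)
  have pp: "integrable N01 (\<lambda>u. I u * I u)" "integrable N01 (\<lambda>u. I u * f u)" "integrable N01 (\<lambda>u. I u * q u)"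
     "integrable N01 (\<lambda>u. f u * f u)" "integrable N01 (\<lambda>u. f u * q u)" "integrable N01 (\<lambda>u. q u * q u)"
    using I f q by (auto intro: SI_prod)
  show ?thesis unfolding e
    by (simp add: ii pp int_const_N meas1_N space_restrict_space)
qed

lemma quantile_distr: assumes "real_distribution M" shows "distr N01 borel (quantile M) = M"
proof -
  interpret cdf_distribution M using assms by (simp add: cdf_distribution_def)
  show ?thesis using distr_I_eq_M unfolding quantile_def .
qed

lemma quantile_mono: assumes "real_distribution M" shows "mono_on {0<..<1} (quantile M)"
proof -
  interpret cdf_distribution M using assms by (simp add: cdf_distribution_def)
  show ?thesis using mono_I unfolding quantile_def .
qed

lemma quantile_moments:
  assumes "finite_second_moment M"
  shows "SI (quantile M)" "integral\<^sup>L N01 (quantile M) = (\<integral>x. x \<partial>M)"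
    "integral\<^sup>L N01 (\<lambda>u. quantile M u * quantile M u) = (\<integral>x. x^2 \<partial>M)"
proof -
  have rd: "real_distribution M" and i2: "integrable M (\<lambda>x. x^2)"
    using assms by (auto simp: finite_second_moment_def)
  have qm: "quantile M \<in> borel_measurable borel" by (rule quantile_meas[OF rd])
  have qmN: "quantile M \<in> measurable N01 borel" by (rule meas_N[OF qm])
  have D: "distr N01 borel (quantile M) = M" by (rule quantile_distr[OF rd])
  have "integrable (distr N01 borel (quantile M)) (\<lambda>x. x^2)" using i2 D by simp
  then have "integrable N01 (\<lambda>u. (quantile M u)^2)"
    using integrable_distr_eq[OF qmN, of "\<lambda>x. x^2"] by simp
  then show si: "SI (quantile M)" using qm by (simp add: SI_def)
  have "(\<integral>x. x \<partial>M) = integral\<^sup>L (distr N01 borel (quantile M)) (\<lambda>x. x)" using D by simp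
  also have "\<dots> = integral\<^sup>L N01 (quantile M)" by (subst integral_distr[OF qmN]) auto
  finally show "integral\<^sup>L N01 (quantile M) = (\<integral>x. x \<partial>M)" by simp
  have "(\<integral>x. x^2 \<partial>M) = integral\<^sup>L (distr N01 borel (quantile M)) (\<lambda>x. x^2)" using D by simp
  also have "\<dots> = integral\<^sup>L N01 (\<lambda>u. (quantile M u)^2)" by (subst integral_distr[OF qmN]) auto
  finally show "integral\<^sup>L N01 (\<lambda>u. quantile M u * quantile M u) = (\<integral>x. x^2 \<partial>M)"
    by (simp add: power2_eq_square)
qed

lemma construct:
  assumes si: "SI q" and mono: "mono_on {0<..<1} q"
  shows "real_distribution (distr N01 borel q)"
    "AE u in N01. quantile (distr N01 borel q) u = q u"
proof -
  let ?G = "distr N01 borel q"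
  have qm: "q \<in> borel_measurable borel" using si by (simp add: SI_def)
  have qmN: "q \<in> measurable N01 borel" by (rule meas_N[OF qm])
  interpret P: prob_space N01 by (rule prob_N)
  show rd: "real_distribution ?G"
    unfolding real_distribution_def real_distribution_axioms_def
    using P.prob_space_distr[OF qmN] by simp
  define S where "S y = {v\<in>{0<..<1}. q v \<le> y}" for y
  have Ssets: "S y \<in> sets N01" for y
  proof -
    have "S y = q -` {..y} \<inter> space N01" by (auto simp: S_def space_restrict_space)
    then show ?thesis using measurable_sets[OF qmN, of "{..y}"] by (simp add: space_restrict_space)
  qed
  have cdfG: "cdf ?G y = measure N01 (S y)" for y
    unfolding cdf_def by (subst measure_distr[OF qmN]) (auto simp: S_def space_restrict_space intro!: arg_cong[where f="measure N01"])
  have Ioc_sets: "{0<..t} \<in> sets N01" if "t < 1" for t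
    using that by (subst sets_restrict_space_iff) auto
  have mIoc: "measure N01 {0<..t} = t" if "0 \<le> t" "t < 1" for t
    using that by (subst measure_restrict_space) auto
  have key: "quantile ?G u = q u" if u: "u \<in> {0<..<1}" "isCont q u" for u
  proof -
    have a: "u \<le> cdf ?G (q u)"
    proof -
      have "{0<..u} \<subseteq> S (q u)" using u mono by (auto simp: S_def mono_on_def)
      then have "measure N01 {0<..u} \<le> measure N01 (S (q u))"
        by (intro P.finite_measure_mono Ssets)
      then show ?thesis using mIoc[of u] u by (simp add: cdfG)
    qed
    have b: "cdf ?G y < u" if y: "y < q u" for y
    proof -
      obtain d where d: "d > 0" "\<And>v. v \<noteq> u \<Longrightarrow> norm (v - u) < d \<Longrightarrow> norm (q v - q u) < q u - y"
        using LIM_D[OF u(2)[unfolded isCont_def], of "q u - y"] y by auto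
      define d' where "d' = min d (u/2)"
      have d': "0 < d'" "d' \<le> d" "d' < u" using d u by (auto simp: d'_def)
      have "S y \<subseteq> {0<..u - d'}"
      proof
        fix v assume v: "v \<in> S y"
        show "v \<in> {0<..u - d'}"
        proof (rule ccontr)
          assume "v \<notin> {0<..u - d'}"
          then have vgt: "v > u - d'" using v by (auto simp: S_def)
          show False
          proof (cases "v \<ge> u")
            case True
            then have "q u \<le> q v" using mono u v by (auto simp: S_def mono_on_def)
            then show False using v y by (auto simp: S_def)
          next
            case False
            then have "norm (q v - q u) < q u - y" using d(2)[of v] vgt d' by auto
            then show False using v by (auto simp: S_def)
          qed
        qed
      qed
      then have "measure N01 (S y) \<le> measure N01 {0<..u - d'}"
        using d' u by (intro P.finite_measure_mono Ioc_sets) auto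
      also have "\<dots> = u - d'" using d' u by (intro mIoc) auto
      finally show ?thesis using d' by (simp add: cdfG)
    qed
    show ?thesis unfolding quantile_def
    proof (rule cInf_eq_minimum)
      show "q u \<in> {y. u \<le> cdf ?G y}" using a by simp
      fix y assume "y \<in> {y. u \<le> cdf ?G y}"
      then show "q u \<le> y" using b[of y] by (cases "y < q u") auto
    qed
  qed
  have cnt: "countable {a\<in>{0<..<1}. \<not> isCont q a}"
    using mono_on_ctble_discont_open[OF _ mono] by simp
  have "AE u in lborel. u \<notin> {a\<in>{0<..<1}. \<not> isCont q a}"
    by (rule AE_not_in[OF countable_imp_null_set_lborel[OF cnt]])
  then have "AE u in lborel. u \<in> {0<..<1} \<longrightarrow> quantile ?G u = q u"
    by eventually_elim (use key in auto)
  then show "AE u in N01. quantile ?G u = q u"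
    by (subst AE_restrict_space_iff) auto
qed

lemma int_N_eq: fixes f :: "real \<Rightarrow> real"
  shows "integral\<^sup>L N01 f = integral\<^sup>L lborel (\<lambda>u. indicator {0<..<1} u * f u)"
  using integral_restrict_space[of "{0<..<1::real}" lborel f] by simp

lemma tvar_N: assumes "0 < \<alpha>"
  shows "TVaR \<alpha> M = 1 / (1 - \<alpha>) * integral\<^sup>L N01 (\<lambda>u. indicator {\<alpha><..<1} u * quantile M u)"
proof -
  have "(\<lambda>u. indicator {0<..<1} u * (indicator {\<alpha><..<1} u * quantile M u)) =
        (\<lambda>u. indicator {\<alpha><..<1} u *\<^sub>R quantile M u)"
    using assms by (auto simp: fun_eq_iff split: split_indicator)
  then show ?thesis unfolding TVaR_def set_lebesgue_integral_def int_N_eq by simp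
qed

lemma wass_N: "wass2_sq G1 G2 = integral\<^sup>L N01 (\<lambda>u. (quantile G1 u - quantile G2 u) * (quantile G1 u - quantile G2 u))"
  unfolding wass2_sq_def set_lebesgue_integral_def int_N_eq by (simp add: power2_eq_square)

lemma unif_N: fixes f :: "real \<Rightarrow> real" assumes "f \<in> borel_measurable borel"
  shows "integral\<^sup>L unif01 f = integral\<^sup>L N01 f"
proof -
  have ud: "unif01 = density lborel (\<lambda>x. ennreal (indicator {0<..<1::real} x))"
  proof -
    have "(\<lambda>x. indicator {0<..<1::real} x / (1::ennreal)) = (\<lambda>x. ennreal (indicator {0<..<1::real} x))"
      by (auto simp: fun_eq_iff split: split_indicator)
    then show ?thesis unfolding unif01_def uniform_measure_def by simp
  qed
  have "integral\<^sup>L unif01 f = integral\<^sup>L lborel (\<lambda>x. indicator {0<..<1::real} x *\<^sub>R f x)"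
    unfolding ud by (rule integral_density) (use assms in auto)
  then show ?thesis by (simp add: int_N_eq)
qed

lemma SI_ind: assumes "0 \<le> \<alpha>" shows "SI (indicator {\<alpha><..<1::real})"
  unfolding SI_def
proof
  show "indicat_real {\<alpha><..<1} \<in> borel_measurable borel" by simp
  have "(\<lambda>u. (indicat_real {\<alpha><..<1} u)^2) = indicator {\<alpha><..<1}"
    by (auto simp: fun_eq_iff split: split_indicator)
  moreover have "integrable N01 (indicat_real {\<alpha><..<1})"
    using assms finite_measure.emeasure_finite[OF prob_space.finite_measure[OF prob_N]]
    by (intro integrable_real_indicator) (auto simp: sets_restrict_space_iff less_top[symmetric])
  ultimately show "integrable N01 (\<lambda>u. (indicat_real {\<alpha><..<1} u)^2)" by simp
qed

lemma int_ind: assumes "0 < \<alpha>" "\<alpha> < 1"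
  shows "integral\<^sup>L N01 (indicator {\<alpha><..<1::real}) = 1 - \<alpha>"
    "integral\<^sup>L N01 (\<lambda>u. indicator {\<alpha><..<1::real} u * indicator {\<alpha><..<1::real} u) = 1 - \<alpha>"
proof -
  have "integral\<^sup>L N01 (indicator {\<alpha><..<1::real}) = measure N01 {\<alpha><..<1}"
    using assms by (simp add: space_restrict_space Int_absorb2 subset_eq)
  also have "\<dots> = 1 - \<alpha>" using assms by (subst measure_restrict_space) auto
  finally show 1: "integral\<^sup>L N01 (indicator {\<alpha><..<1::real}) = 1 - \<alpha>" .
  have "(\<lambda>u. indicator {\<alpha><..<1::real} u * indicator {\<alpha><..<1::real} u) = (indicator {\<alpha><..<1::real} :: real \<Rightarrow> real)"
    by (auto simp: fun_eq_iff split: split_indicator)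
  then show "integral\<^sup>L N01 (\<lambda>u. indicator {\<alpha><..<1::real} u * indicator {\<alpha><..<1::real} u) = 1 - \<alpha>"
    using 1 by simp
qed

lemma SI_lin: assumes I: "SI I" and f: "SI f"
  shows "SI (\<lambda>u. c1 + c2 * I u + c3 * f u)"
proof -
  have e: "(\<lambda>u. (c1 + c2 * I u + c3 * f u)^2) = (\<lambda>u. c1*c1 + (2*c1*c2) * I u + (2*c1*c3) * f u
     + (c2*c2) * (I u * I u) + (2*c2*c3) * (I u * f u) + (c3*c3) * (f u * f u))"
    by (rule ext) (simp add: power2_eq_square algebra_simps)
  have ii: "integrable N01 I" "integrable N01 f" using I f by (auto intro: SI_int)
  have pp: "integrable N01 (\<lambda>u. I u * I u)" "integrable N01 (\<lambda>u. I u * f u)"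
     "integrable N01 (\<lambda>u. f u * f u)" using I f by (auto intro: SI_prod)
  have m: "I \<in> borel_measurable borel" "f \<in> borel_measurable borel" using I f by (auto simp: SI_def)
  have "(\<lambda>u. c1 + c2 * I u + c3 * f u) \<in> borel_measurable borel" using m by measurable
  moreover have "integrable N01 (\<lambda>u. (c1 + c2 * I u + c3 * f u)^2)"
    unfolding e by (simp add: ii pp int_const_N)
  ultimately show ?thesis by (simp add: SI_def)
qed

lemma alg_lam:
  fixes V s sg C K lam :: real
  assumes V: "V > 0" and s: "s > 0" and sg: "sg > 0" and C: "C \<ge> 0" and CS: "C^2 \<le> V * s^2"
    and K1: "K < sg * s" and K2: "K * sqrt V > sg * C"
    and lam: "lam = K / s^2 * sqrt ((C^2 - V * s^2) / (K^2 - sg^2 * s^2)) - C / s^2"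
  shows "lam \<ge> 0" "sg * (C + lam * s^2) = K * sqrt (V + 2 * lam * C + lam^2 * s^2)"
proof -
  have sV: "sqrt V > 0" using V by simp
  have "sg * C \<ge> 0" using sg C by simp
  then have Kp: "K > 0" using K2 sV by (smt (verit) mult_nonpos_nonneg)
  have "K^2 < (sg * s)^2" using Kp K1 by (intro power_strict_mono) auto
  then have den: "K^2 - sg^2 * s^2 < 0" by (simp add: power_mult_distrib)
  define R where "R = (C^2 - V * s^2) / (K^2 - sg^2 * s^2)"
  have R0: "R \<ge> 0" unfolding R_def using den CS by (intro divide_nonpos_neg) auto
  define t where "t = K * sqrt R"
  have t0: "t \<ge> 0" using Kp R0 by (simp add: t_def)
  have t2: "t^2 = K^2 * R" using R0 by (simp add: t_def power_mult_distrib)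
  have lt: "lam * s^2 = t - C" using s by (simp add: lam t_def R_def field_simps)
  have RK: "R * (K^2 - sg^2 * s^2) = C^2 - V * s^2" using den by (simp add: R_def)
  have KV: "(sg * C)^2 < (K * sqrt V)^2" using K2 \<open>sg * C \<ge> 0\<close> by (intro power_strict_mono) auto
  then have KV': "sg^2 * C^2 < K^2 * V" using V by (simp add: power_mult_distrib)
  have "C^2 \<le> t^2"
  proof -
    have "C^2 * (K^2 - sg^2 * s^2) \<ge> K^2 * R * (K^2 - sg^2 * s^2)"
    proof -
      have "K^2 * R * (K^2 - sg^2 * s^2) = K^2 * (C^2 - V * s^2)" using RK by (simp add: mult.assoc)
      also have "\<dots> \<le> C^2 * (K^2 - sg^2 * s^2)"
      proof -
        have "s^2 * (sg^2 * C^2) \<le> s^2 * (K^2 * V)" using KV' s by (intro mult_left_mono) auto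
        then show ?thesis by (simp add: algebra_simps)
      qed
      finally show ?thesis .
    qed
    then have "K^2 * R \<ge> C^2" using den by (simp add: mult_le_cancel_right)
    then show ?thesis using t2 by simp
  qed
  then have "C \<le> t" using t0 C by (simp add: power2_le_iff_abs_le)
  then have "lam * s^2 \<ge> 0" using lt by simp
  moreover have "0 < s^2" using s by simp
  ultimately show "lam \<ge> 0" by (simp add: zero_le_mult_iff)
  have H2: "V + 2 * lam * C + lam^2 * s^2 = V + (t^2 - C^2) / s^2"
  proof -
    have tt: "t = C + lam * s^2" using lt by simp
    have "t^2 - C^2 = s^2 * (2 * lam * C + lam^2 * s^2)" unfolding tt by (simp add: power2_eq_square algebra_simps)
    then have "(t^2 - C^2) / s^2 = 2 * lam * C + lam^2 * s^2" using s by simp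
    then show ?thesis by simp
  qed
  have Hn: "V + (t^2 - C^2) / s^2 \<ge> 0" using \<open>C^2 \<le> t^2\<close> V s by simp
  have "(sg * t)^2 = (K * sqrt (V + (t^2 - C^2) / s^2))^2"
  proof -
    have "(K * sqrt (V + (t^2 - C^2) / s^2))^2 = K^2 * (V + (t^2 - C^2) / s^2)"
      using Hn by (simp add: power_mult_distrib)
    also have "\<dots> = (sg * t)^2"
    proof -
      have e1: "t^2 * (sg^2 * s^2 - K^2) = K^2 * (V * s^2 - C^2)"
      proof -
        have "t^2 * (sg^2 * s^2 - K^2) = - (K^2 * (R * (K^2 - sg^2 * s^2)))"
          unfolding t2 by (simp add: algebra_simps)
        also have "\<dots> = K^2 * (V * s^2 - C^2)" unfolding RK by (simp add: algebra_simps)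
        finally show ?thesis .
      qed
      have "K^2 * (V + (t^2 - C^2) / s^2) = (K^2 * (V * s^2 - C^2) + K^2 * t^2) / s^2"
        using s by (simp add: add_divide_distrib diff_divide_distrib algebra_simps)
      also have "\<dots> = (t^2 * (sg^2 * s^2 - K^2) + K^2 * t^2) / s^2" unfolding e1 ..
      also have "\<dots> = t^2 * sg^2" using s by (simp add: algebra_simps)
      finally show ?thesis by (simp add: power_mult_distrib)
    qed
    finally show ?thesis ..
  qed
  moreover have "0 \<le> sg * t" using t0 sg by simp
  moreover have "0 \<le> K * sqrt (V + (t^2 - C^2) / s^2)" using Kp Hn by simp
  ultimately have "sg * t = K * sqrt (V + (t^2 - C^2) / s^2)"
    by (rule power2_eq_imp_eq)
  then show "sg * (C + lam * s^2) = K * sqrt (V + 2 * lam * C + lam^2 * s^2)"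
    using lt H2 by simp
qed

lemma alg_upper:
  fixes V s sg C K lam TG \<mu> P m H :: real
  assumes V: "V > 0" and sg: "sg > 0" and lam: "lam \<ge> 0"
    and H: "H = sqrt (V + 2 * lam * C + lam^2 * s^2)" and Hp: "V + 2 * lam * C + lam^2 * s^2 > 0"
    and X: "(TG - \<mu>) + lam * (P - m*\<mu>) \<le> sg * H"
    and alt: "lam = 0 \<or> (P - m*\<mu> \<ge> K \<and> sg * (C + lam * s^2) = K * H)"
  shows "TG \<le> \<mu> + sg * (V + lam * C) / H"
proof (cases "lam = 0")
  case True
  then have "H = sqrt V" using H by simp
  moreover have "sg * V / sqrt V = sg * sqrt V" 
  proof -
    have "V / sqrt V = sqrt V" using V by (simp add: real_div_sqrt)
    moreover have "sg * V / sqrt V = sg * (V / sqrt V)" by simp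
    ultimately show ?thesis by simp
  qed
  ultimately show ?thesis using X True by simp
next
  case False
  then have PK: "P - m*\<mu> \<ge> K" and eq: "sg * (C + lam * s^2) = K * H" using alt by auto
  have H0: "H > 0" using H Hp by simp
  have HH: "H^2 = V + 2 * lam * C + lam^2 * s^2" using H Hp by simp
  have "TG - \<mu> \<le> sg * H - lam * K"
  proof -
    have "lam * K \<le> lam * (P - m*\<mu>)" using PK lam by (rule mult_left_mono)
    then show ?thesis using X by linarith
  qed
  also have "sg * H - lam * K = sg * (V + lam * C) / H"
  proof -
    have "H * (sg * H - lam * K) = sg * H^2 - lam * (K * H)" by (simp add: algebra_simps power2_eq_square)
    also have "\<dots> = sg * (V + lam * C)" using HH eq[symmetric] by (simp add: algebra_simps power2_eq_square)
    finally show ?thesis using H0 by (simp add: field_simps)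
  qed
  finally show ?thesis by simp
qed

lemma nonneg_sq_N: "0 \<le> integral\<^sup>L N01 (\<lambda>u. (x u :: real) * x u)"
  by (rule integral_nonneg_AE) simp

theorem corollary1:
  fixes F :: "real measure" and \<alpha> \<mu> \<sigma> :: real and \<epsilon> :: ereal
  assumes F: "finite_second_moment F"
    and sdF: "dsd F > 0"
    and \<alpha>: "0 < \<alpha>" "\<alpha> < 1"
    and \<sigma>: "\<sigma> > 0"
    and A3: "\<epsilon> > ereal ((dmean F - \<mu>) ^ 2 + (dsd F - \<sigma>) ^ 2)"
  defines "c0 \<equiv> corr unif01 (\<lambda>u. quantile F u) (indicator {\<alpha><..<1})"
    and "V \<equiv> \<alpha> / (1 - \<alpha>)"
    and "C \<equiv> TVaR \<alpha> F - dmean F"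
    and "K \<equiv> (dmean F ^ 2 + dsd F ^ 2 + \<mu> ^ 2 + \<sigma> ^ 2 - 2 * \<mu> * dmean F
               - real_of_ereal \<epsilon>) / 2"
  defines "lam \<equiv> (if \<epsilon> < ereal ((dmean F - \<mu>) ^ 2 + (dsd F - \<sigma>) ^ 2
                                   + 2 * \<sigma> * dsd F * (1 - c0))
               then K / dsd F ^ 2 * sqrt ((C ^ 2 - V * dsd F ^ 2) / (K ^ 2 - \<sigma> ^ 2 * dsd F ^ 2))
                    - C / dsd F ^ 2
               else 0)"
  shows "(SUP G \<in> amb_set F \<epsilon> \<mu> \<sigma>. ereal (TVaR \<alpha> G)) =
         ereal (\<mu> + \<sigma> * (V + lam * C) / sqrt (V + 2 * lam * C + lam ^ 2 * dsd F ^ 2))"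
proof -
  define m where "m = dmean F"
  define s where "s = dsd F"
  define T where "T = TVaR \<alpha> F"
  define a where "a = 1 - \<alpha>"
  define w where "w = 1 / a"
  define e where "e = real_of_ereal \<epsilon>"
  let ?f = "quantile F"
  let ?I = "indicator {\<alpha><..<1} :: real \<Rightarrow> real"
  have a0: "a > 0" using \<alpha> by (simp add: a_def)
  have wa: "w * a = 1" using a0 by (simp add: w_def)
  have Vw: "V = w - 1" using a0 by (simp add: V_def w_def a_def field_simps)
  have V0: "V > 0" using \<alpha> by (simp add: V_def)
  have CT: "C = T - m" by (simp add: C_def T_def m_def)
  have s0: "s > 0" using sdF by (simp add: s_def)
  have rdF: "real_distribution F" using F by (simp add: finite_second_moment_def)
  have SIf: "SI ?f" and intf: "integral\<^sup>L N01 ?f = m" and intff0: "integral\<^sup>L N01 (\<lambda>u. ?f u * ?f u) = (\<integral>x. x^2 \<partial>F)"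
    using quantile_moments[OF F] by (simp_all add: m_def dmean_def)
  have intff: "integral\<^sup>L N01 (\<lambda>u. ?f u * ?f u) = m^2 + s^2"
  proof -
    have "sqrt ((\<integral>x. x^2 \<partial>F) - m^2) > 0" using s0 by (simp add: s_def dsd_def m_def)
    then have "(\<integral>x. x^2 \<partial>F) - m^2 > 0" by simp
    then have "s^2 = (\<integral>x. x^2 \<partial>F) - m^2" by (simp add: s_def dsd_def m_def)
    then show ?thesis using intff0 by simp
  qed
  have SII: "SI ?I" using \<alpha> by (intro SI_ind) simp
  have intI: "integral\<^sup>L N01 ?I = a" and intII: "integral\<^sup>L N01 (\<lambda>u. ?I u * ?I u) = a"
    using int_ind[OF \<alpha>] by (simp_all add: a_def)
  have intIf: "integral\<^sup>L N01 (\<lambda>u. ?I u * ?f u) = a * T"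
    using tvar_N[OF \<alpha>(1), of F] a0 by (simp add: T_def a_def field_simps)
  have fmono: "mono_on {0<..<1} ?f" by (rule quantile_mono[OF rdF])
  note B = bil4[OF SII SIf]
  have BF: "integral\<^sup>L N01 (\<lambda>u. (a1 + a2*?I u + a3*?f u + 0*?f u) * (b1 + b2*?I u + b3*?f u + 0*?f u))
     = a1*b1 + (a1*b2 + a2*b1) * a + (a1*b3+a3*b1) * m + a2*b2 * a + (a2*b3+a3*b2) * (a*T)
       + a3*b3 * (m^2+s^2)" for a1 a2 a3 b1 b2 b3
    using B[OF SIf, of a1 a2 a3 0 b1 b2 b3 0] intI intII intf intff intIf by simp
  have C0: "C \<ge> 0"
  proof -
    have "integral\<^sup>L N01 (\<lambda>u. ((-1) + w*?I u + 0*?f u + 0*?f u) * ((- ?f \<alpha>) + 0*?I u + 1*?f u + 0*?f u)) = C"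
      unfolding BF using wa by (simp add: CT algebra_simps)
    moreover have "0 \<le> integral\<^sup>L N01 (\<lambda>u. ((-1) + w*?I u + 0*?f u + 0*?f u) * ((- ?f \<alpha>) + 0*?I u + 1*?f u + 0*?f u))"
    proof (rule integral_nonneg_AE, rule AE_I2)
      fix u assume "u \<in> space N01"
      then have u: "0 < u" "u < 1" by (auto simp: space_restrict_space)
      show "0 \<le> ((-1) + w*?I u + 0*?f u + 0*?f u) * ((- ?f \<alpha>) + 0*?I u + 1*?f u + 0*?f u)"
      proof (cases "\<alpha> < u")
        case True
        have "w \<ge> 1" using a0 \<alpha> by (simp add: w_def a_def)
        moreover have "?f \<alpha> \<le> ?f u" using fmono True u \<alpha> by (auto simp: mono_on_def)
        ultimately show ?thesis using True u by simp
      next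
        case False
        have "?f u \<le> ?f \<alpha>" using fmono False u \<alpha> by (auto simp: mono_on_def)
        then show ?thesis using False by (simp add: mult_nonneg_nonneg)
      qed
    qed
    ultimately show ?thesis by simp
  qed
  have CS: "C^2 \<le> V * s^2"
  proof -
    have "0 \<le> integral\<^sup>L N01 (\<lambda>u. ((V*m - C) + (C*w)*?I u + (-V)*?f u + 0*?f u) * ((V*m - C) + (C*w)*?I u + (-V)*?f u + 0*?f u))"
      by (rule nonneg_sq_N)
    also have "\<dots> = V * (V * s^2 - C^2)"
      unfolding BF using wa Vw CT by algebra
    finally show ?thesis using V0 by (simp add: zero_le_mult_iff)
  qed

  define H where "H = sqrt (V + 2 * lam * C + lam ^ 2 * s ^ 2)"
  have Kdef: "2 * K = (m - \<mu>)^2 + s^2 + \<sigma>^2 - e"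
    by (simp add: K_def m_def s_def e_def power2_eq_square field_simps)
  have eps_fin: "\<epsilon> = ereal e" if "\<epsilon> \<noteq> \<infinity>"
    using that A3 by (cases \<epsilon>) (auto simp: e_def)
  have A3': "e > (m - \<mu>)^2 + (s - \<sigma>)^2" if "\<epsilon> \<noteq> \<infinity>"
    using A3 eps_fin[OF that] by (simp add: m_def s_def)
  have sV0: "sqrt V > 0" using V0 by simp
  have c0eq: "c0 = C / (s * sqrt V)"
  proof -
    have mf: "?f \<in> borel_measurable borel" by (rule quantile_meas[OF rdF])
    have mI: "?I \<in> borel_measurable borel" by simp
    have u1: "integral\<^sup>L unif01 (\<lambda>u. ?f u * ?I u) = a * T"
      using intIf unif_N[of "\<lambda>u. ?f u * ?I u"] mf mI by (simp add: mult.commute)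
    have u2: "integral\<^sup>L unif01 ?f = m" using unif_N[OF mf] intf by simp
    have u3: "integral\<^sup>L unif01 ?I = a" using unif_N[OF mI] intI by simp
    have u4: "integral\<^sup>L unif01 (\<lambda>u. ?f u * ?f u) = m^2 + s^2"
      using unif_N[of "\<lambda>u. ?f u * ?f u"] mf intff by simp
    have u5: "integral\<^sup>L unif01 (\<lambda>u. ?I u * ?I u) = a"
      using unif_N[of "\<lambda>u. ?I u * ?I u"] mI intII by simp
    have "c0 = (a * T - m * a) / sqrt ((m^2 + s^2 - m * m) * (a - a * a))"
      unfolding c0_def corr_def covar_def u1 u2 u3 u4 u5 by simp
    also have "(m^2 + s^2 - m * m) * (a - a * a) = (s * a)^2 * V"
      using a0 by (simp add: V_def a_def power2_eq_square field_simps)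
    also have "sqrt ((s * a)^2 * V) = s * a * sqrt V"
      using s0 a0 by (simp add: real_sqrt_mult)
    also have "(a * T - m * a) / (s * a * sqrt V) = C / (s * sqrt V)"
      using a0 s0 sV0 by (simp add: CT field_simps)
    finally show ?thesis .
  qed
  have LAM: "lam \<ge> 0 \<and> (\<epsilon> \<noteq> \<infinity> \<longrightarrow> \<sigma> * (C + lam * s^2) \<ge> K * H)
           \<and> (lam \<noteq> 0 \<longrightarrow> \<epsilon> \<noteq> \<infinity> \<and> \<sigma> * (C + lam * s^2) = K * H)"
  proof (cases "\<epsilon> < ereal ((dmean F - \<mu>) ^ 2 + (dsd F - \<sigma>) ^ 2 + 2 * \<sigma> * dsd F * (1 - c0))")
    case True
    then have fin: "\<epsilon> \<noteq> \<infinity>" by auto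
    have e1: "e < (m - \<mu>)^2 + (s - \<sigma>)^2 + 2 * \<sigma> * s * (1 - c0)"
      using True eps_fin[OF fin] by (simp add: m_def s_def)
    have e2: "e > (m - \<mu>)^2 + (s - \<sigma>)^2" by (rule A3'[OF fin])
    have K1: "K < \<sigma> * s" using e2 Kdef by (simp add: power2_eq_square algebra_simps)
    have "K > \<sigma> * s * c0" using e1 Kdef by (simp add: power2_eq_square algebra_simps)
    also have "\<sigma> * s * c0 = \<sigma> * C / sqrt V" using s0 sV0 by (simp add: c0eq)
    finally have K2: "K * sqrt V > \<sigma> * C" using sV0 by (simp add: field_simps)
    have lam_eq: "lam = K / s^2 * sqrt ((C^2 - V * s^2) / (K^2 - \<sigma>^2 * s^2)) - C / s^2"
      using True by (simp add: lam_def s_def)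
    note L = alg_lam[OF V0 s0 \<sigma> C0 CS K1 K2 lam_eq]
    then show ?thesis using fin by (simp add: H_def)
  next
    case False
    then have l0: "lam = 0" by (simp add: lam_def)
    have "\<sigma> * C \<ge> K * sqrt V" if fin: "\<epsilon> \<noteq> \<infinity>"
    proof -
      have "\<not> e < (m - \<mu>)^2 + (s - \<sigma>)^2 + 2 * \<sigma> * s * (1 - c0)"
        using False eps_fin[OF fin] by (simp add: m_def s_def)
      then have "K \<le> \<sigma> * s * c0" using Kdef by (simp add: power2_eq_square algebra_simps)
      also have "\<sigma> * s * c0 = \<sigma> * C / sqrt V" using s0 sV0 by (simp add: c0eq)
      finally show ?thesis using sV0 by (simp add: field_simps)
    qed
    then show ?thesis using l0 by (simp add: H_def)
  qed
  have lam0: "lam \<ge> 0" using LAM by simp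
  have Hp: "V + 2 * lam * C + lam ^ 2 * s ^ 2 > 0" using V0 lam0 C0 by (simp add: add_pos_nonneg)
  have H0: "H > 0" using Hp by (simp add: H_def)
  have HH: "H^2 = V + 2 * lam * C + lam ^ 2 * s ^ 2" using Hp by (simp add: H_def)
  define RHS where "RHS = \<mu> + \<sigma> * (V + lam * C) / H"
  have RHS_eq: "RHS = \<mu> + \<sigma> * (V + lam * C) / sqrt (V + 2 * lam * C + lam ^ 2 * dsd F ^ 2)"
    by (simp add: RHS_def H_def s_def)
  have ub: "TVaR \<alpha> G \<le> RHS" if G: "G \<in> amb_set F \<epsilon> \<mu> \<sigma>" for G
  proof -
    have G2: "finite_second_moment G" and mG: "(\<integral>x. x \<partial>G) = \<mu>" and m2G: "(\<integral>x. x^2 \<partial>G) = \<mu>^2 + \<sigma>^2"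
      and wG: "\<epsilon> = \<infinity> \<or> wass2 F G \<le> sqrt e"
      using G by (auto simp: amb_set_def e_def)
    let ?q = "quantile G"
    have SIq: "SI ?q" and intq: "integral\<^sup>L N01 ?q = \<mu>" and intqq: "integral\<^sup>L N01 (\<lambda>u. ?q u * ?q u) = \<mu>^2 + \<sigma>^2"
      using quantile_moments[OF G2] mG m2G by simp_all
    define TG where "TG = TVaR \<alpha> G"
    define P where "P = integral\<^sup>L N01 (\<lambda>u. ?f u * ?q u)"
    have intIq: "integral\<^sup>L N01 (\<lambda>u. ?I u * ?q u) = a * TG"
      using tvar_N[OF \<alpha>(1), of G] a0 by (simp add: TG_def a_def field_simps)
    have BG: "integral\<^sup>L N01 (\<lambda>u. (a1 + a2*?I u + a3*?f u + a4*?q u) * (b1 + b2*?I u + b3*?f u + b4*?q u))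
     = a1*b1 + (a1*b2 + a2*b1) * a + (a1*b3+a3*b1) * m + (a1*b4+a4*b1) * \<mu> + a2*b2 * a
       + (a2*b3+a3*b2) * (a*T) + (a2*b4+a4*b2) * (a*TG)
       + a3*b3 * (m^2+s^2) + (a3*b4+a4*b3) * P + a4*b4 * (\<mu>^2+\<sigma>^2)" for a1 a2 a3 a4 b1 b2 b3 b4
      using B[OF SIq, of a1 a2 a3 a4 b1 b2 b3 b4] intI intII intf intff intIf intq intqq intIq
      by (simp add: P_def)
    have X: "(TG - \<mu>) + lam * (P - m*\<mu>) \<le> \<sigma> * H"
    proof -
      define c1 where "c1 = \<sigma> * (-1 - lam * m) + H * \<mu>"
      have "0 \<le> integral\<^sup>L N01 (\<lambda>u. (c1 + (\<sigma>*w)*?I u + (\<sigma>*lam)*?f u + (-H)*?q u) * (c1 + (\<sigma>*w)*?I u + (\<sigma>*lam)*?f u + (-H)*?q u))"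
        by (rule nonneg_sq_N)
      also have "\<dots> = 2 * \<sigma>^2 * H^2 - 2 * \<sigma> * H * ((TG - \<mu>) + lam * (P - m*\<mu>))"
        unfolding BG using wa Vw CT HH by (simp add: c1_def) algebra
      finally have "\<sigma> * H * ((TG - \<mu>) + lam * (P - m*\<mu>)) \<le> \<sigma> * H * (\<sigma> * H)"
        by (simp add: power2_eq_square algebra_simps)
      moreover have "\<sigma> * H > 0" using \<sigma> H0 by simp
      ultimately show ?thesis by (simp add: mult_le_cancel_left_pos)
    qed
    have alt: "lam = 0 \<or> (P - m*\<mu> \<ge> K \<and> \<sigma> * (C + lam * s^2) = K * H)"
    proof (cases "lam = 0")
      case False
      then have fin: "\<epsilon> \<noteq> \<infinity>" and eq: "\<sigma> * (C + lam * s^2) = K * H" using LAM by auto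
      have "wass2 F G \<le> sqrt e" using wG fin by simp
      then have "sqrt (wass2_sq F G) \<le> sqrt e" by (simp add: wass2_def)
      moreover have "wass2_sq F G \<ge> 0" unfolding wass_N by (rule nonneg_sq_N)
      ultimately have "wass2_sq F G \<le> e" using real_sqrt_le_iff
        by (metis real_sqrt_ge_zero real_sqrt_le_mono real_sqrt_pow2 power2_le_iff_abs_le order_trans
           linorder_not_le real_sqrt_less_mono less_le_not_le)
      moreover have "wass2_sq F G = (m^2 + s^2) - 2 * P + (\<mu>^2 + \<sigma>^2)"
      proof -
        have "wass2_sq F G = integral\<^sup>L N01 (\<lambda>u. (0 + 0*?I u + 1*?f u + (-1)*?q u) * (0 + 0*?I u + 1*?f u + (-1)*?q u))"
          unfolding wass_N by simp
        also have "\<dots> = (m^2 + s^2) - 2 * P + (\<mu>^2 + \<sigma>^2)" unfolding BG by simp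
        finally show ?thesis .
      qed
      ultimately have "P - m*\<mu> \<ge> K" using Kdef by (simp add: power2_eq_square algebra_simps)
      then show ?thesis using eq by simp
    qed simp
    show ?thesis unfolding RHS_def TG_def[symmetric]
      by (rule alg_upper[OF V0 \<sigma> lam0 H_def Hp X alt])
  qed
  define k where "k = \<sigma> / H"
  have kH: "k * H = \<sigma>" using H0 by (simp add: k_def)
  have k0: "k > 0" using \<sigma> H0 by (simp add: k_def)
  define c1 where "c1 = \<mu> - k * (1 + lam * m)"
  define qs where "qs = (\<lambda>u. c1 + (k*w) * ?I u + (k*lam) * ?f u)"
  have SIqs: "SI qs" unfolding qs_def by (rule SI_lin[OF SII SIf])
  have w0: "w > 0" using a0 by (simp add: w_def)
  have mono_qs: "mono_on {0<..<1} qs"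
  proof (rule mono_onI)
    fix x y :: real assume xy: "x \<in> {0<..<1}" "y \<in> {0<..<1}" "x \<le> y"
    have "?I x \<le> ?I y" using xy by (auto split: split_indicator)
    then have 1: "(k*w) * ?I x \<le> (k*w) * ?I y" using k0 w0 by (intro mult_left_mono) auto
    have "?f x \<le> ?f y" using fmono xy by (auto simp: mono_on_def)
    then have 2: "(k*lam) * ?f x \<le> (k*lam) * ?f y" using k0 lam0 by (intro mult_left_mono) auto
    show "qs x \<le> qs y" using 1 2 by (simp add: qs_def)
  qed
  define Gs where "Gs = distr N01 borel qs"
  have rdG: "real_distribution Gs" and AEq: "AE u in N01. quantile Gs u = qs u"
    using construct[OF SIqs mono_qs] by (simp_all add: Gs_def)
  have qsm: "qs \<in> borel_measurable borel" using SIqs by (simp add: SI_def)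
  have qsN: "qs \<in> measurable N01 borel" by (rule meas_N[OF qsm])
  have qGm: "quantile Gs \<in> borel_measurable borel" by (rule quantile_meas[OF rdG])
  have mf: "?f \<in> borel_measurable borel" by (rule quantile_meas[OF rdF])
  have qs_form: "qs u = c1 + (k*w) * ?I u + (k*lam) * ?f u + 0 * ?f u" for u by (simp add: qs_def)
  have int_qs: "integral\<^sup>L N01 qs = \<mu>"
  proof -
    have "integral\<^sup>L N01 qs = integral\<^sup>L N01 (\<lambda>u. (c1 + (k*w) * ?I u + (k*lam) * ?f u + 0 * ?f u) * (1 + 0 * ?I u + 0 * ?f u + 0 * ?f u))"
      by (simp add: qs_def)
    also have "\<dots> = \<mu>" unfolding BF using wa by (simp add: c1_def algebra_simps)
    finally show ?thesis .
  qed
  have int_qs2: "integral\<^sup>L N01 (\<lambda>u. qs u * qs u) = \<mu>^2 + \<sigma>^2"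
  proof -
    have "integral\<^sup>L N01 (\<lambda>u. qs u * qs u) = integral\<^sup>L N01 (\<lambda>u. (c1 + (k*w) * ?I u + (k*lam) * ?f u + 0 * ?f u) * (c1 + (k*w) * ?I u + (k*lam) * ?f u + 0 * ?f u))"
      by (simp add: qs_def)
    also have "\<dots> = \<mu>^2 + \<sigma>^2" unfolding BF using wa Vw CT kH HH by (simp add: c1_def) algebra
    finally show ?thesis .
  qed
  have int_Iqs: "integral\<^sup>L N01 (\<lambda>u. ?I u * qs u) = a * (\<mu> + k * (V + lam * C))"
  proof -
    have "integral\<^sup>L N01 (\<lambda>u. ?I u * qs u) = integral\<^sup>L N01 (\<lambda>u. (0 + 1 * ?I u + 0 * ?f u + 0 * ?f u) * (c1 + (k*w) * ?I u + (k*lam) * ?f u + 0 * ?f u))"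
      by (simp add: qs_def)
    also have "\<dots> = a * (\<mu> + k * (V + lam * C))" unfolding BF Vw CT by (simp add: c1_def algebra_simps)
    finally show ?thesis .
  qed
  have int_fqs: "integral\<^sup>L N01 (\<lambda>u. (?f u - qs u) * (?f u - qs u)) = (m^2 + s^2) + (\<mu>^2 + \<sigma>^2) - 2 * m * \<mu> - 2 * k * (C + lam * s^2)"
  proof -
    have "integral\<^sup>L N01 (\<lambda>u. (?f u - qs u) * (?f u - qs u)) = integral\<^sup>L N01 (\<lambda>u. ((-c1) + (-(k*w)) * ?I u + (1 - k*lam) * ?f u + 0 * ?f u) * ((-c1) + (-(k*w)) * ?I u + (1 - k*lam) * ?f u + 0 * ?f u))"
      by (simp add: qs_def algebra_simps)
    also have "\<dots> = (m^2 + s^2) + (\<mu>^2 + \<sigma>^2) - 2 * m * \<mu> - 2 * k * (C + lam * s^2)"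
      unfolding BF using wa Vw CT kH HH by (simp add: c1_def) algebra
    finally show ?thesis .
  qed
  have Gs_amb: "Gs \<in> amb_set F \<epsilon> \<mu> \<sigma>"
  proof -
    have "integrable N01 (\<lambda>u. (qs u)^2)" using SIqs by (simp add: SI_def)
    then have "integrable Gs (\<lambda>x. x^2)" unfolding Gs_def
      using integrable_distr_eq[OF qsN, of "\<lambda>x. x^2"] by simp
    then have fsm: "finite_second_moment Gs" using rdG by (simp add: finite_second_moment_def)
    have m1: "(\<integral>x. x \<partial>Gs) = \<mu>" unfolding Gs_def using int_qs by (subst integral_distr[OF qsN]) auto
    have m2: "(\<integral>x. x^2 \<partial>Gs) = \<mu>^2 + \<sigma>^2" unfolding Gs_def using int_qs2
      by (subst integral_distr[OF qsN]) (auto simp: power2_eq_square)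
    have W: "\<epsilon> = \<infinity> \<or> wass2 F Gs \<le> sqrt (real_of_ereal \<epsilon>)"
    proof (cases "\<epsilon> = \<infinity>")
      case False
      have ws: "wass2_sq F Gs = integral\<^sup>L N01 (\<lambda>u. (?f u - qs u) * (?f u - qs u))"
        unfolding wass_N using AEq mf qGm qsm
        by (intro integral_cong_AE) (auto intro!: meas_N elim!: AE_mp)
      have "\<sigma> * (C + lam * s^2) \<ge> K * H" using LAM False by simp
      then have "k * (C + lam * s^2) \<ge> K" using H0 by (simp add: k_def field_simps)
      then have "wass2_sq F Gs \<le> e" unfolding ws int_fqs using Kdef
        by (simp add: power2_eq_square algebra_simps)
      then show ?thesis by (simp add: wass2_def e_def)
    qed simp
    show ?thesis using fsm m1 m2 W by (simp add: amb_set_def)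
  qed
  have TGs: "TVaR \<alpha> Gs = RHS"
  proof -
    have "integral\<^sup>L N01 (\<lambda>u. ?I u * quantile Gs u) = integral\<^sup>L N01 (\<lambda>u. ?I u * qs u)"
      using AEq qGm qsm by (intro integral_cong_AE) (auto intro!: meas_N elim!: AE_mp)
    then have "TVaR \<alpha> Gs = 1 / a * (a * (\<mu> + k * (V + lam * C)))"
      using tvar_N[OF \<alpha>(1), of Gs] int_Iqs by (simp add: a_def)
    also have "\<dots> = RHS" using a0 by (simp add: RHS_def k_def)
    finally show ?thesis .
  qed
  have "(SUP G \<in> amb_set F \<epsilon> \<mu> \<sigma>. ereal (TVaR \<alpha> G)) = ereal RHS"
  proof (rule antisym)
    show "(SUP G \<in> amb_set F \<epsilon> \<mu> \<sigma>. ereal (TVaR \<alpha> G)) \<le> ereal RHS"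
      by (rule SUP_least) (simp add: ub)
    show "ereal RHS \<le> (SUP G \<in> amb_set F \<epsilon> \<mu> \<sigma>. ereal (TVaR \<alpha> G))"
      using Gs_amb TGs by (intro SUP_upper2[of Gs]) auto
  qed
  then show ?thesis using RHS_eq by simp
qed

end
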